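(* Let $k\ge1$ and $\sigma\in\mathcal P_{4k}\setminus\mathcal D_{4k}$. With the sets $D_1,\dots,D_4,O_1,O_2,O_3,O_{4,1},O_{4,2},O_5,O_6$ defined in the context, $$\mathrm{Ord}_1:=|D_1|+\tfrac35|D_2|+\tfrac35|D_3|+\tfrac15|D_4|+\tfrac65|O_1|+\tfrac12|O_2|+\tfrac3{10}|O_3|-\tfrac15|O_{4,1}|-\tfrac15|O_{4,2}|-\tfrac25|O_5|-\tfrac35|O_6|<\frac{6k}{5}.$$
   Context: $\mathcal P_{4k}$ is the set of permutations $\sigma$ of $\{1,\dots,4k\}$ with $\sigma_1<\sigma_3<\dots<\sigma_{4k-1}$ and $\sigma_{2\ell-1}<\sigma_{2\ell}$ for all $\ell$; $\mathcal D_{4k}=\{\sigma\in\mathcal P_{4k}:\lceil\sigma_{2\ell-1}/4\rceil=\lceil\sigma_{2\ell}/4\rceil\ \forall\ell\}$. For $\sigma\in\mathcal P_{4k}$ consider the $2k$ pairs $(i,j)=(\sigma_{2\ell-1},\sigma_{2\ell})$, $1\le\ell\le2k$ (so $i<j$). For an index $m$ let $r(m)\in\{1,2,3,4\}$ with $r(m)\equiv m\pmod 4$, and call $\lceil m/4\rceil$ its block. A pair $(i,j)$ with $\lceil i/4\rceil=\lceil j/4\rceil$ belongs to $D_1$ if $(r(i),r(j))=(1,2)$; to $D_2$ if $(r(i),r(j))\in\{(1,3),(1,4)\}$; to $D_3$ if $(r(i),r(j))\in\{(2,3),(2,4)\}$; to $D_4$ if $(r(i),r(j))=(3,4)$. A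 pair with $\lceil i/4\rceil<\lceil j/4\rceil$ belongs to $O_1$ if $(r(i),r(j))=(1,1)$; to $O_2$ if $\{r(i),r(j)\}=\{1,2\}$; to $O_3$ if one of $r(i),r(j)$ is $1$ and the other is $3$ or $4$; to $O_{4,1}$ if $(r(i),r(j))=(2,2)$; to $O_{4,2}$ if $(r(i),r(j))=(3,3)$; to $O_{5,1}$ if one of $r(i),r(j)$ is $2$ and the other is $3$ or $4$; to $O_{5,2}$ if $\{r(i),r(j)\}=\{3,4\}$; to $O_6$ if $(r(i),r(j))=(4,4)$. Set $O_5=O_{5,1}\cup O_{5,2}$. $|\cdot|$ denotes cardinality. *)

theory Defs
  imports "HOL-Combinatorics.Permutations" Complex_Main
begin

definition blk :: "nat \<Rightarrow> nat" where "blk m = (m + 3) div 4"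
definition rr :: "nat \<Rightarrow> nat" where "rr m = (if m mod 4 = 0 then 4 else m mod 4)"

definition inP :: "nat \<Rightarrow> (nat \<Rightarrow> nat) \<Rightarrow> bool" where
  "inP k \<sigma> \<longleftrightarrow> \<sigma> permutes {1..4*k}
     \<and> (\<forall>l\<in>{1..<2*k}. \<sigma> (2*l-1) < \<sigma> (2*l+1))
     \<and> (\<forall>l\<in>{1..2*k}. \<sigma> (2*l-1) < \<sigma> (2*l))"

definition inD :: "nat \<Rightarrow> (nat \<Rightarrow> nat) \<Rightarrow> bool" where
  "inD k \<sigma> \<longleftrightarrow> inP k \<sigma> \<and> (\<forall>l\<in>{1..2*k}. blk (\<sigma> (2*l-1)) = blk (\<sigma> (2*l)))"

definition pairs :: "nat \<Rightarrow> (nat \<Rightarrow> nat) \<Rightarrow> (nat \<times> nat) set" where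
  "pairs k \<sigma> = (\<lambda>l. (\<sigma> (2*l-1), \<sigma> (2*l))) ` {1..2*k}"

definition diag :: "nat \<times> nat \<Rightarrow> bool" where "diag p \<longleftrightarrow> blk (fst p) = blk (snd p)"
definition offd :: "nat \<times> nat \<Rightarrow> bool" where "offd p \<longleftrightarrow> blk (fst p) < blk (snd p)"

definition rpair :: "nat \<times> nat \<Rightarrow> nat \<times> nat" where "rpair p = (rr (fst p), rr (snd p))"

definition cls :: "(nat \<times> nat \<Rightarrow> bool) \<Rightarrow> (nat \<times> nat) set \<Rightarrow> nat \<Rightarrow> (nat \<Rightarrow> nat) \<Rightarrow> nat" where
  "cls B R k \<sigma> = card {p \<in> pairs k \<sigma>. B p \<and> rpair p \<in> R}"

definition Ord1 :: "nat \<Rightarrow> (nat \<Rightarrow> nat) \<Rightarrow> real" where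
  "Ord1 k \<sigma> =
     real (cls diag {(1,2)} k \<sigma>)
   + 3/5 * real (cls diag {(1,3),(1,4)} k \<sigma>)
   + 3/5 * real (cls diag {(2,3),(2,4)} k \<sigma>)
   + 1/5 * real (cls diag {(3,4)} k \<sigma>)
   + 6/5 * real (cls offd {(1,1)} k \<sigma>)
   + 1/2 * real (cls offd {(1,2),(2,1)} k \<sigma>)
   + 3/10 * real (cls offd {(1,3),(1,4),(3,1),(4,1)} k \<sigma>)
   - 1/5 * real (cls offd {(2,2)} k \<sigma>)
   - 1/5 * real (cls offd {(3,3)} k \<sigma>)
   - 2/5 * real (cls offd {(2,3),(2,4),(3,2),(4,2),(3,4),(4,3)} k \<sigma>)
   - 3/5 * real (cls offd {(4,4)} k \<sigma>)"

end

theory Submission imports Defs begin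

lemma blk_rr_gen: "blk (4*q + r) = q + (r+3) div 4 \<and> rr (4*q+r) = (if r mod 4 = 0 then 4 else r mod 4)"
  unfolding blk_def rr_def
proof -
  have "4*q + r + 3 = (r+3) + 4*q" by simp
  then have "(4*q + r + 3) div 4 = q + (r+3) div 4" by simp
  moreover have "(4*q+r) mod 4 = r mod 4" by simp
  ultimately show "(4 * q + r + 3) div 4 = q + (r + 3) div 4 \<and>
    (if (4 * q + r) mod 4 = 0 then 4 else (4 * q + r) mod 4) = (if r mod 4 = 0 then 4 else r mod 4)" by simp
qed

lemma blk_rr: "m \<ge> 1 \<Longrightarrow> m + 4 = 4 * blk m + rr m \<and> 1 \<le> rr m \<and> rr m \<le> 4"
proof -
  assume m: "m \<ge> 1"
  define q where "q = m div 4"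
  define r where "r = m mod 4"
  have e: "m = 4*q + r" unfolding q_def r_def by simp
  have "r < 4" unfolding r_def by simp
  then have "r = 0 \<or> r = 1 \<or> r = 2 \<or> r = 3" by auto
  then show ?thesis using m unfolding e using blk_rr_gen[of q r] by (elim disjE) auto
qed

lemma blk_rr_x: "b \<ge> 1 \<Longrightarrow> t \<in> {1..4} \<Longrightarrow> blk (4*b-4+t) = b \<and> rr (4*b-4+t) = t"
proof -
  assume b: "b \<ge> 1" and t: "t \<in> {1..4}"
  have e: "4*b-4+t = 4*(b-1) + t" using b by auto
  have "t = 1 \<or> t = 2 \<or> t = 3 \<or> t = 4" using t by auto
  then show ?thesis unfolding e using blk_rr_gen[of "b-1" t] b by (elim disjE) auto
qed

definition gg :: "nat \<Rightarrow> real" where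
  "gg r = (if r=1 then 5/8 else if r=2 then 0 else if r = 3 then -1/20 else -1/5)"
definition wd :: "nat \<Rightarrow> nat \<Rightarrow> real" where
  "wd r s = (if {r,s}={1,2} then 1 else if {r,s}={3,4} then 1/5 else 3/5)"
definition bv :: "nat \<Rightarrow> nat \<Rightarrow> real" where
  "bv t s = (if s = 0 then gg t else wd t s / 2)"

lemma block4:
  fixes a b c d :: nat
  assumes "a = 0 \<or> a = 2 \<or> a = 3 \<or> a = 4" "b = 0 \<or> b = 1 \<or> b = 3 \<or> b = 4"
    "c = 0 \<or> c = 1 \<or> c = 2 \<or> c = 4" "d = 0 \<or> d = 1 \<or> d = 2 \<or> d = 3"
    "a = 2 \<longleftrightarrow> b = 1" "a = 3 \<longleftrightarrow> c = 1" "a = 4 \<longleftrightarrow> d = 1"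
    "b = 3 \<longleftrightarrow> c = 2" "b = 4 \<longleftrightarrow> d = 2" "c = 4 \<longleftrightarrow> d = 3"
  shows "bv 1 a + bv 2 b + bv 3 c + bv 4 d + (if a = 0 \<or> b = 0 \<or> c = 0 \<or> d = 0 then 1/40 else 0) \<le> 6/5"
  using assms by (elim disjE; simp add: bv_def gg_def wd_def doubleton_eq_iff)

lemma block_gen:
  assumes "\<forall>t\<in>{1..4::nat}. P t \<le> 4 \<and> P t \<noteq> t \<and> (P t \<noteq> 0 \<longrightarrow> P (P t) = t)"
  shows "(\<Sum>t\<in>{1..4}. bv t (P t)) + (if (\<exists>t\<in>{1..4}. P t = 0) then 1/40 else 0) \<le> 6/5"
proof -
  have s: "{1..4::nat} = {1,2,3,4}" by auto
  have A: "P 1 \<le> 4" "P 1 \<noteq> 1" "P 1 \<noteq> 0 \<Longrightarrow> P (P 1) = 1"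
     "P 2 \<le> 4" "P 2 \<noteq> 2" "P 2 \<noteq> 0 \<Longrightarrow> P (P 2) = 2"
     "P 3 \<le> 4" "P 3 \<noteq> 3" "P 3 \<noteq> 0 \<Longrightarrow> P (P 3) = 3"
     "P 4 \<le> 4" "P 4 \<noteq> 4" "P 4 \<noteq> 0 \<Longrightarrow> P (P 4) = 4"
    using assms by (auto simp: s)
  have B: "(P 1 = 0 \<or> P 1 = 2 \<or> P 1 = 3 \<or> P 1 = 4)" "P 2 = 0 \<or> P 2 = 1 \<or> P 2 = 3 \<or> P 2 = 4"
    "P 3 = 0 \<or> P 3 = 1 \<or> P 3 = 2 \<or> P 3 = 4" "P 4 = 0 \<or> P 4 = 1 \<or> P 4 = 2 \<or> P 4 = 3"
    using A by auto
  have C: "P 1 = 2 \<longleftrightarrow> P 2 = 1" "P 1 = 3 \<longleftrightarrow> P 3 = 1" "P 1 = 4 \<longleftrightarrow> P 4 = 1"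
    "P 2 = 3 \<longleftrightarrow> P 3 = 2" "P 2 = 4 \<longleftrightarrow> P 4 = 2" "P 3 = 4 \<longleftrightarrow> P 4 = 3"
    using A by (metis zero_neq_numeral zero_neq_one)+
  have "bv 1 (P 1) + bv 2 (P 2) + bv 3 (P 3) + bv 4 (P 4) + (if P 1 = 0 \<or> P 2 = 0 \<or> P 3 = 0 \<or> P 4 = 0 then 1/40 else 0) \<le> 6/5"
    by (rule block4) (use B C in auto)
  moreover have "(\<Sum>t\<in>{1..4}. bv t (P t)) = bv 1 (P 1) + bv 2 (P 2) + bv 3 (P 3) + bv 4 (P 4)"
    unfolding s by simp
  moreover have "(\<exists>t\<in>{1..4}. P t = 0) = (P 1 = 0 \<or> P 2 = 0 \<or> P 3 = 0 \<or> P 4 = 0)"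
    unfolding s by simp
  ultimately show ?thesis by simp
qed

definition ind :: "(nat \<times> nat \<Rightarrow> bool) \<Rightarrow> (nat \<times> nat) set \<Rightarrow> nat \<times> nat \<Rightarrow> real" where
  "ind B R p = (if B p \<and> rpair p \<in> R then 1 else 0)"

definition W :: "nat \<times> nat \<Rightarrow> real" where
  "W p =
     ind diag {(1,2)} p
   + 3/5 * ind diag {(1,3),(1,4)} p
   + 3/5 * ind diag {(2,3),(2,4)} p
   + 1/5 * ind diag {(3,4)} p
   + 6/5 * ind offd {(1,1)} p
   + 1/2 * ind offd {(1,2),(2,1)} p
   + 3/10 * ind offd {(1,3),(1,4),(3,1),(4,1)} p
   - 1/5 * ind offd {(2,2)} p
   - 1/5 * ind offd {(3,3)} p
   - 2/5 * ind offd {(2,3),(2,4),(3,2),(4,2),(3,4),(4,3)} p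
   - 3/5 * ind offd {(4,4)} p"

lemma pairW:
  assumes "a \<ge> 1" "a < b"
  shows "W (a,b) \<le> (if blk b = blk a then wd (rr a) (rr b) / 2 else gg (rr a))
                   + (if blk a = blk b then wd (rr b) (rr a) / 2 else gg (rr b))"
proof -
  have ha: "a + 4 = 4 * blk a + rr a" "1 \<le> rr a" "rr a \<le> 4" using blk_rr[of a] assms by auto
  have hb: "b + 4 = 4 * blk b + rr b" "1 \<le> rr b" "rr b \<le> 4" using blk_rr[of b] assms by auto
  have le: "blk a \<le> blk b" using ha hb assms by linarith
  have lt: "blk a = blk b \<Longrightarrow> rr a < rr b" using ha hb assms by linarith
  have ra: "rr a = 1 \<or> rr a = 2 \<or> rr a = 3 \<or> rr a = 4" using ha by auto
  have rb: "rr b = 1 \<or> rr b = 2 \<or> rr b = 3 \<or> rr b = 4" using hb by auto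
  show ?thesis
  proof (cases "blk a = blk b")
    case True
    then show ?thesis using lt ra rb
      by (elim disjE; simp add: W_def ind_def diag_def offd_def rpair_def wd_def gg_def doubleton_eq_iff)
  next
    case False
    then have "blk a < blk b" using le by auto
    then show ?thesis using False ra rb
      by (elim disjE; simp add: W_def ind_def diag_def offd_def rpair_def wd_def gg_def doubleton_eq_iff)
  qed
qed

lemma pairsum: "(\<Sum>l=1..(n::nat). f (2*l-1) + f (2*l)) = (\<Sum>j=1..2*n. (f j::real))"
proof (induction n)
  case 0 then show ?case by simp
next
  case (Suc n)
  have "{1..2*Suc n} = {1..2*n} \<union> {2*n+1, 2*n+2}" by auto
  then have "(\<Sum>j=1..2*Suc n. f j) = (\<Sum>j=1..2*n. f j) + f (2*n+1) + f (2*n+2)" by simp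
  then show ?case using Suc by simp
qed

lemma blocksum: "(\<Sum>m=1..4*(k::nat). (v m::real)) = (\<Sum>b=1..k. \<Sum>t=1..4. v (4*b-4+t))"
proof (induction k)
  case 0 then show ?case by simp
next
  case (Suc k)
  have "{1..4*Suc k} = {1..4*k} \<union> {4*k+1, 4*k+2, 4*k+3, 4*k+4}" by auto
  then have "(\<Sum>j=1..4*Suc k. v j) = (\<Sum>j=1..4*k. v j) + v (4*k+1) + v (4*k+2) + v (4*k+3) + v (4*k+4)"
    by simp
  moreover have "{1..4::nat} = {1,2,3,4}" by auto
  ultimately show ?case using Suc by (simp add: ac_simps)
qed

definition partner :: "(nat \<Rightarrow> nat) \<Rightarrow> nat \<Rightarrow> nat" where
  "partner \<sigma> m = (let j = inv \<sigma> m in if odd j then \<sigma> (j+1) else \<sigma> (j-1))"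

lemma cls_sum: "real (cls B R k \<sigma>) = (\<Sum>p\<in>pairs k \<sigma>. ind B R p)"
proof -
  have f: "finite (pairs k \<sigma>)" unfolding pairs_def by simp
  have "cls B R k \<sigma> = (\<Sum>p\<in>pairs k \<sigma>. if B p \<and> rpair p \<in> R then 1 else 0)"
    unfolding cls_def card_eq_sum using sum.inter_filter[OF f, of "\<lambda>_. 1::nat"] by simp
  then show ?thesis unfolding ind_def by (simp add: if_distrib cong: if_cong)
qed

lemma Ord1_sum: "Ord1 k \<sigma> = (\<Sum>p\<in>pairs k \<sigma>. W p)"
  unfolding Ord1_def W_def cls_sum
  by (simp add: sum.distrib sum_subtractf sum_distrib_left)

theorem lemma5p4:
  fixes k :: nat and \<sigma> :: "nat \<Rightarrow> nat"
  assumes "k \<ge> 1" and "inP k \<sigma>" and "\<not> inD k \<sigma>"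
  shows "Ord1 k \<sigma> < 6 * real k / 5"
proof -
  define S where "S = {1..4*k}"
  have perm: "\<sigma> permutes S" and inc: "\<And>l. l \<in> {1..2*k} \<Longrightarrow> \<sigma> (2*l-1) < \<sigma> (2*l)"
    using assms(2) unfolding inP_def S_def by auto
  have inj: "inj \<sigma>" using perm by (rule permutes_inj)
  have inS: "\<And>j. j \<in> S \<Longrightarrow> \<sigma> j \<in> S" using perm by (simp add: permutes_in_image)
  have lS: "\<And>l. l \<in> {1..2*k} \<Longrightarrow> 2*l-1 \<in> S \<and> 2*l \<in> S" unfolding S_def by auto
  have invs: "\<And>x. inv \<sigma> (\<sigma> x) = x" using perm by (rule permutes_inverses(2))
  have pa1: "\<And>l. l \<in> {1..2*k} \<Longrightarrow> partner \<sigma> (\<sigma> (2*l-1)) = \<sigma> (2*l)"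
    unfolding partner_def Let_def invs by auto
  have pa2: "\<And>l. l \<in> {1..2*k} \<Longrightarrow> partner \<sigma> (\<sigma> (2*l)) = \<sigma> (2*l-1)"
    unfolding partner_def Let_def invs by auto
  have decomp: "\<exists>l\<in>{1..2*k}. (m = \<sigma> (2*l-1) \<and> partner \<sigma> m = \<sigma> (2*l))
                  \<or> (m = \<sigma> (2*l) \<and> partner \<sigma> m = \<sigma> (2*l-1))" if "m \<in> S" for m
  proof -
    define j where "j = inv \<sigma> m"
    have j: "j \<in> S" "\<sigma> j = m"
      unfolding j_def using permutes_in_image[OF permutes_inv[OF perm]] that
        permutes_inverses(1)[OF perm] by auto
    show ?thesis
    proof (cases "odd j")
      case True
      define l where "l = (j+1) div 2"
      have "j = 2*l-1" unfolding l_def using True by presburger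
      moreover have "l \<in> {1..2*k}" using j(1) True unfolding S_def l_def by auto presburger+
      ultimately have "j = 2*l-1" "l \<in> {1..2*k}" by auto
      then show ?thesis using pa1 j by blast
    next
      case False
      then obtain l where "j = 2*l" "l \<in> {1..2*k}" using j(1) unfolding S_def by auto
      then show ?thesis using pa2 j by blast
    qed
  qed
  have pS: "partner \<sigma> m \<in> S \<and> partner \<sigma> m \<noteq> m \<and> partner \<sigma> (partner \<sigma> m) = m" if "m \<in> S" for m
  proof -
    from decomp[OF that] obtain l where l: "l \<in> {1..2*k}" and
      c: "(m = \<sigma> (2*l-1) \<and> partner \<sigma> m = \<sigma> (2*l)) \<or> (m = \<sigma> (2*l) \<and> partner \<sigma> m = \<sigma> (2*l-1))"
      by blast
    have ne: "\<sigma> (2*l-1) \<noteq> \<sigma> (2*l)" using inc[OF l] by simp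
    show ?thesis using c pa1[OF l] pa2[OF l] lS[OF l] inS ne by auto
  qed
  define v where "v m = (if blk (partner \<sigma> m) = blk m then wd (rr m) (rr (partner \<sigma> m)) / 2
                         else gg (rr m))" for m
  define pf where "pf l = (\<sigma> (2*l-1), \<sigma> (2*l))" for l
  have injpf: "inj_on pf {1..2*k}"
  proof (rule inj_onI)
    fix x y assume "x \<in> {1..2*k}" "y \<in> {1..2*k}" "pf x = pf y"
    then have "2*x-1 = 2*y-1" using inj unfolding pf_def by (auto dest: injD)
    then show "x = y" using \<open>x \<in> _\<close> \<open>y \<in> _\<close> by auto
  qed
  have "Ord1 k \<sigma> = (\<Sum>l=1..2*k. W (pf l))"
    unfolding Ord1_sum pairs_def pf_def[symmetric] using sum.reindex[OF injpf] by simp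
  also have "\<dots> \<le> (\<Sum>l=1..2*k. v (\<sigma> (2*l-1)) + v (\<sigma> (2*l)))"
  proof (rule sum_mono)
    fix l assume l: "l \<in> {1..2*k}"
    have "\<sigma> (2*l-1) \<in> S" using lS[OF l] inS by auto
    then have "\<sigma> (2*l-1) \<ge> 1" unfolding S_def by auto
    then show "W (pf l) \<le> v (\<sigma> (2*l-1)) + v (\<sigma> (2*l))"
      unfolding pf_def v_def pa1[OF l] pa2[OF l] by (rule pairW[OF _ inc[OF l]])
  qed
  also have "\<dots> = (\<Sum>j=1..4*k. v (\<sigma> j))"
    using pairsum[of "\<lambda>j. v (\<sigma> j)" "2*k"] by simp
  also have "\<dots> = (\<Sum>m=1..4*k. v m)"
    using sum.reindex_bij_betw[OF permutes_imp_bij[OF perm], of v] unfolding S_def by simp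
  also have "\<dots> = (\<Sum>b=1..k. \<Sum>t=1..4. v (4*b-4+t))" by (rule blocksum)
  also have "\<dots> < (\<Sum>b=1..k. 6/5)"
  proof (rule sum_strict_mono_ex1)
    have blockb: "(\<Sum>t=1..4. v (4*b-4+t)) + (if (\<exists>t\<in>{1..4}. blk (partner \<sigma> (4*b-4+t)) \<noteq> b) then 1/40 else 0) \<le> 6/5"
      if b: "b \<in> {1..k}" for b
    proof -
      define x where "x t = 4*b-4+t" for t
      define P where "P t = (if blk (partner \<sigma> (x t)) = b then rr (partner \<sigma> (x t)) else 0)" for t
      have xS: "t \<in> {1..4} \<Longrightarrow> x t \<in> S" for t using b unfolding x_def S_def by auto
      have xbr: "t \<in> {1..4} \<Longrightarrow> blk (x t) = b \<and> rr (x t) = t" for t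
        using blk_rr_x[of b t] b unfolding x_def by auto
      have props: "P t \<le> 4 \<and> P t \<noteq> t \<and> (P t \<noteq> 0 \<longrightarrow> P (P t) = t) \<and> v (x t) = bv t (P t)
                   \<and> (P t = 0 \<longleftrightarrow> blk (partner \<sigma> (x t)) \<noteq> b)"
        if t: "t \<in> {1..4}" for t
      proof -
        define q where "q = partner \<sigma> (x t)"
        have q: "q \<in> S" "q \<noteq> x t" "partner \<sigma> q = x t" using pS[OF xS[OF t]] unfolding q_def by auto
        have q1: "q \<ge> 1" using q(1) unfolding S_def by auto
        have hq: "q + 4 = 4 * blk q + rr q" "1 \<le> rr q" "rr q \<le> 4" using blk_rr[OF q1] by auto
        show ?thesis
        proof (cases "blk q = b")
          case True
          have Pt: "P t = rr q" unfolding P_def q_def[symmetric] using True by simp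
          have s: "rr q \<in> {1..4}" using hq by auto
          have qx: "q = x (rr q)" unfolding x_def using hq True b by auto
          have ne: "rr q \<noteq> t" using qx q(2) by auto
          have "P (rr q) = t" unfolding P_def using qx[symmetric] q(3) xbr[OF t] by simp
          then show ?thesis using Pt hq ne xbr[OF t] True unfolding v_def bv_def q_def by auto
        next
          case False
          have Pt: "P t = 0" unfolding P_def q_def[symmetric] using False by simp
          then show ?thesis using False xbr[OF t] t unfolding v_def bv_def q_def by auto
        qed
      qed
      have "(\<Sum>t\<in>{1..4}. bv t (P t)) + (if (\<exists>t\<in>{1..4}. P t = 0) then 1/40 else 0) \<le> 6/5"
        by (rule block_gen) (use props in blast)
      moreover have "(\<Sum>t=1..4. v (4*b-4+t)) = (\<Sum>t\<in>{1..4}. bv t (P t))"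
        using props unfolding x_def by (intro sum.cong) auto
      moreover have "(\<exists>t\<in>{1..4}. P t = 0) = (\<exists>t\<in>{1..4}. blk (partner \<sigma> (4*b-4+t)) \<noteq> b)"
        using props unfolding x_def by auto
      ultimately show ?thesis by simp
    qed
    show "finite {1..k}" by simp
    show "\<forall>b\<in>{1..k}. (\<Sum>t=1..4. v (4*b-4+t)) \<le> 6/5"
    proof
      fix b assume b: "b \<in> {1..k}"
      have "0 \<le> (if (\<exists>t\<in>{1..4}. blk (partner \<sigma> (4*b-4+t)) \<noteq> b) then 1/40 else (0::real))"
        by simp
      then show "(\<Sum>t=1..4. v (4*b-4+t)) \<le> 6/5" using blockb[OF b] by linarith
    qed
    obtain l where l: "l \<in> {1..2*k}" and nb: "blk (\<sigma> (2*l-1)) \<noteq> blk (\<sigma> (2*l))"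
      using assms(2,3) unfolding inD_def by auto
    define m where "m = \<sigma> (2*l-1)"
    have mS: "m \<in> S" using lS[OF l] inS unfolding m_def by auto
    have m1: "m \<ge> 1" "m \<le> 4*k" using mS unfolding S_def by auto
    have hm: "m + 4 = 4 * blk m + rr m" "1 \<le> rr m" "rr m \<le> 4" using blk_rr[OF m1(1)] by auto
    have bk: "blk m \<in> {1..k}" using hm m1 by auto
    have mx: "4 * blk m - 4 + rr m = m" using hm bk by auto
    have "blk (partner \<sigma> (4 * blk m - 4 + rr m)) \<noteq> blk m"
    proof -
      have "partner \<sigma> m = \<sigma> (2*l)" using pa1[OF l] unfolding m_def by simp
      then show ?thesis using mx nb unfolding m_def by simp
    qed
    then have "\<exists>t\<in>{1..4}. blk (partner \<sigma> (4 * blk m - 4 + t)) \<noteq> blk m" using hm by auto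
    then have "(\<Sum>t=1..4. v (4*blk m-4+t)) < 6/5" using blockb[OF bk] by simp
    then show "\<exists>b\<in>{1..k}. (\<Sum>t=1..4. v (4*b-4+t)) < 6/5" using bk by blast
  qed
  also have "\<dots> = 6 * real k / 5" by simp
  finally show ?thesis .
qed

end
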